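(* Let $f:\mathbb{R}\to(0,\infty)$ be a smooth function with positive lower and upper bounds, and let $g_f=-f^2(x)\,dt^2+dx^2$ on $\mathbb{R}^2$ with coordinates $(t,x)$, time-oriented by $\partial/\partial t$. If $p=(t_0,x_0)$ and $f(x_0)=\sup_{x\in\mathbb{R}}f(x)$, then $p$ is a timelike pole of $(\mathbb{R}^2,g_f)$.
   Context: A point $p$ of a Lorentzian manifold is a timelike pole if no timelike geodesic starting at $p$ contains a pair of conjugate points. *)

theory Defs
  imports "HOL-Analysis.Analysis"
begin

text \<open>Pseudo-Riemannian geometry on the coordinate chart R^2 (index type 2).
  A metric is given by its component matrix g p at each point p.\<close>

type_synonym metric2 = "real^2 \<Rightarrow> real^2^2"

definition smooth_fun :: "(real \<Rightarrow> real) \<Rightarrow> bool" where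
  "smooth_fun f \<longleftrightarrow> (\<forall>n x. ((deriv ^^ n) f) differentiable (at x))"

definition pd :: "2 \<Rightarrow> (real^2 \<Rightarrow> real) \<Rightarrow> real^2 \<Rightarrow> real" where
  "pd k h p = deriv (\<lambda>s. h (p + s *\<^sub>R axis k 1)) 0"

definition gform :: "metric2 \<Rightarrow> real^2 \<Rightarrow> real^2 \<Rightarrow> real^2 \<Rightarrow> real" where
  "gform g p u v = (\<Sum>i\<in>UNIV. \<Sum>j\<in>UNIV. g p $ i $ j * u $ i * v $ j)"

definition christ :: "metric2 \<Rightarrow> 2 \<Rightarrow> 2 \<Rightarrow> 2 \<Rightarrow> real^2 \<Rightarrow> real" where
  "christ g k i j p = (1/2) * (\<Sum>l\<in>UNIV. matrix_inv (g p) $ k $ l *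
      (pd i (\<lambda>q. g q $ j $ l) p + pd j (\<lambda>q. g q $ i $ l) p - pd l (\<lambda>q. g q $ i $ j) p))"

text \<open>Riemann tensor components: R(d_i,d_j)d_k = R^l_{ijk} d_l, with
  R(X,Y)Z = nabla_X nabla_Y Z - nabla_Y nabla_X Z - nabla_[X,Y] Z.\<close>
definition riem :: "metric2 \<Rightarrow> 2 \<Rightarrow> 2 \<Rightarrow> 2 \<Rightarrow> 2 \<Rightarrow> real^2 \<Rightarrow> real" where
  "riem g l i j k p = pd i (christ g l j k) p - pd j (christ g l i k) p
     + (\<Sum>m\<in>UNIV. christ g l i m p * christ g m j k p - christ g l j m p * christ g m i k p)"

definition vel :: "(real \<Rightarrow> real^2) \<Rightarrow> real \<Rightarrow> real \<Rightarrow> real^2" where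
  "vel \<gamma> b s = vector_derivative \<gamma> (at s within {0..b})"

definition geodesic_on :: "metric2 \<Rightarrow> (real \<Rightarrow> real^2) \<Rightarrow> real \<Rightarrow> bool" where
  "geodesic_on g \<gamma> b \<longleftrightarrow> (\<exists>\<gamma>1 \<gamma>2. \<forall>s\<in>{0..b}.
     (\<gamma> has_vector_derivative \<gamma>1 s) (at s within {0..b}) \<and>
     (\<gamma>1 has_vector_derivative \<gamma>2 s) (at s within {0..b}) \<and>
     (\<forall>k. \<gamma>2 s $ k + (\<Sum>i\<in>UNIV. \<Sum>j\<in>UNIV. christ g k i j (\<gamma> s) * \<gamma>1 s $ i * \<gamma>1 s $ j) = 0))"

text \<open>Covariant derivative along gamma of a vector field V with ordinary derivative V'.\<close>
definition covd :: "metric2 \<Rightarrow> (real \<Rightarrow> real^2) \<Rightarrow> real \<Rightarrow> (real \<Rightarrow> real^2) \<Rightarrow> (real \<Rightarrow> real^2) \<Rightarrow> real \<Rightarrow> real^2" where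
  "covd g \<gamma> b V' V r = (\<chi> k. V' r $ k + (\<Sum>i\<in>UNIV. \<Sum>j\<in>UNIV. christ g k i j (\<gamma> r) * vel \<gamma> b r $ i * V r $ j))"

text \<open>Jacobi field along gamma: D_s D_s J + R(J, gamma') gamma' = 0.\<close>
definition jacobi_field :: "metric2 \<Rightarrow> (real \<Rightarrow> real^2) \<Rightarrow> real \<Rightarrow> (real \<Rightarrow> real^2) \<Rightarrow> bool" where
  "jacobi_field g \<gamma> b J \<longleftrightarrow> (\<exists>J1 W1. \<forall>s\<in>{0..b}.
     (J has_vector_derivative J1 s) (at s within {0..b}) \<and>
     (covd g \<gamma> b J1 J has_vector_derivative W1 s) (at s within {0..b}) \<and>
     (\<forall>l. W1 s $ l
        + (\<Sum>i\<in>UNIV. \<Sum>j\<in>UNIV. christ g l i j (\<gamma> s) * vel \<gamma> b s $ i * covd g \<gamma> b J1 J s $ j)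
        + (\<Sum>i\<in>UNIV. \<Sum>j\<in>UNIV. \<Sum>k\<in>UNIV. riem g l i j k (\<gamma> s) * J s $ i * vel \<gamma> b s $ j * vel \<gamma> b s $ k)
        = 0))"

definition conjugate_pair :: "metric2 \<Rightarrow> (real \<Rightarrow> real^2) \<Rightarrow> real \<Rightarrow> real \<Rightarrow> real \<Rightarrow> bool" where
  "conjugate_pair g \<gamma> b s1 s2 \<longleftrightarrow> s1 \<in> {0..b} \<and> s2 \<in> {0..b} \<and> s1 \<noteq> s2 \<and>
     (\<exists>J. jacobi_field g \<gamma> b J \<and> J s1 = 0 \<and> J s2 = 0 \<and> (\<exists>s\<in>{0..b}. J s \<noteq> 0))"

definition timelike_geodesic :: "metric2 \<Rightarrow> (real \<Rightarrow> real^2) \<Rightarrow> real \<Rightarrow> bool" where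
  "timelike_geodesic g \<gamma> b \<longleftrightarrow> geodesic_on g \<gamma> b \<and>
     (\<forall>s\<in>{0..b}. gform g (\<gamma> s) (vel \<gamma> b s) (vel \<gamma> b s) < 0)"

definition timelike_pole :: "metric2 \<Rightarrow> real^2 \<Rightarrow> bool" where
  "timelike_pole g p \<longleftrightarrow> (\<forall>\<gamma> b. b > 0 \<and> timelike_geodesic g \<gamma> b \<and> \<gamma> 0 = p \<longrightarrow>
      \<not> (\<exists>s1 s2. conjugate_pair g \<gamma> b s1 s2))"

text \<open>The metric g_f = -f(x)^2 dt^2 + dx^2; coordinate 1 is t, coordinate 2 is x.\<close>
definition gf :: "(real \<Rightarrow> real) \<Rightarrow> metric2" where
  "gf f p = (\<chi> i j. if i = j then (if i = 1 then - (f (p $ 2) * f (p $ 2)) else 1) else 0)"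

end

theory Submission
  imports Defs
begin


lemma matrix_inv_eqI:
  fixes A :: "real^'n^'n"
  assumes "A ** B = mat 1" "B ** A = mat 1"
  shows "matrix_inv A = B"
proof -
  have ex: "\<exists>B'. A ** B' = mat 1 \<and> B' ** A = mat 1" using assms by blast
  define C where "C = matrix_inv A"
  have C: "A ** C = mat 1 \<and> C ** A = mat 1"
    unfolding C_def matrix_inv_def by (rule someI_ex[OF ex])
  have "C = C ** (A ** B)" using assms by (simp add: matrix_mul_rid)
  also have "\<dots> = (C ** A) ** B" by (simp add: matrix_mul_assoc)
  also have "\<dots> = B" using C by (simp add: matrix_mul_lid)
  finally show ?thesis unfolding C_def .
qed

definition ginv :: "(real \<Rightarrow> real) \<Rightarrow> real^2 \<Rightarrow> real^2^2" where
  "ginv f p = (\<chi> i j. if i = j then (if i = 1 then - 1/(f (p $ 2) * f (p $ 2)) else 1) else 0)"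

lemma gf_inv: assumes "f (p$2) \<noteq> 0" shows "matrix_inv (gf f p) = ginv f p"
  apply (rule matrix_inv_eqI)
  using assms by (auto simp: matrix_matrix_mult_def mat_def vec_eq_iff forall_2 sum_2 gf_def ginv_def)




lemma pd_fun2:
  assumes "(G has_real_derivative G') (at (p$2))"
  shows "pd k (\<lambda>q. G (q$2)) p = (if k = 2 then G' else 0)"
proof -
  have e: "(\<lambda>s. G ((p + s *\<^sub>R axis k 1) $ 2)) = (\<lambda>s. G (p$2 + (if k = 2 then s else 0)))"
    by (auto simp: axis_def)
  show ?thesis
  proof (cases "k = 2")
    case True
    have "((\<lambda>s. G (p$2 + s)) has_real_derivative G') (at 0)"
      using DERIV_chain2[where f=G and g="\<lambda>s. p$2 + s" and x=0 and Da=G' and Db=1 and s=UNIV] assms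
    proof -
      have "((+) (p $ 2) has_real_derivative 1) (at 0)"
        by (rule derivative_eq_intros refl | simp)+
      thus ?thesis using DERIV_chain2[where f=G and g="\<lambda>s. p$2 + s" and x=0 and Da=G' and Db=1 and s=UNIV] assms
        by simp
    qed
    then show ?thesis unfolding pd_def e using True by (simp add: DERIV_imp_deriv)
  next
    case False
    then show ?thesis unfolding pd_def e by simp
  qed
qed

lemma pd_const: "pd k (\<lambda>q. c) p = 0"
  unfolding pd_def by simp




lemma pd_gf:
  assumes fd: "\<And>x. DERIV f x :> deriv f x"
  shows "pd i (\<lambda>q. gf f q $ j $ l) p =
    (if i = 2 \<and> j = 1 \<and> l = 1 then - (2 * f (p$2) * deriv f (p$2)) else 0)"
proof -
  have e: "(\<lambda>q. gf f q $ j $ l) = (\<lambda>q. (\<lambda>y. if j = l then if j = 1 then -(f y * f y) else 1 else 0) (q$2))"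
    by (auto simp: gf_def)
  have d: "((\<lambda>y. if j = l then if j = 1 then -(f y * f y) else 1 else 0) has_real_derivative
        (if j = 1 \<and> l = 1 then - (2 * f (p$2) * deriv f (p$2)) else 0)) (at (p$2))"
  proof (cases "j = l \<and> j = 1")
    case True
    have "((\<lambda>y. -(f y * f y)) has_real_derivative - (2 * f (p$2) * deriv f (p$2))) (at (p$2))"
      by (rule derivative_eq_intros refl fd | simp)+
    then show ?thesis using True by simp
  next
    case False
    then have "(\<lambda>y. if j = l then if j = 1 then -(f y * f y) else 1 else 0) = (\<lambda>y. if j = l then 1 else 0)"
      by auto
    then show ?thesis using False by auto
  qed
  show ?thesis unfolding e pd_fun2[OF d] by auto
qed

lemma christ_gf:
  assumes fd: "\<And>x. DERIV f x :> deriv f x" and fpos: "\<And>x. f x > 0"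
  shows "christ (gf f) k i j p =
    (if k = 1 \<and> ((i = 1 \<and> j = 2) \<or> (i = 2 \<and> j = 1)) then deriv f (p$2) / f (p$2)
     else if k = 2 \<and> i = 1 \<and> j = 1 then f (p$2) * deriv f (p$2) else 0)"
proof -
  have ne: "f (p$2) \<noteq> 0" using fpos[of "p$2"] by simp
  show ?thesis
    unfolding christ_def gf_inv[where f=f and p=p, OF ne] pd_gf[OF fd] sum_2
    using exhaust_2[of k] exhaust_2[of i] exhaust_2[of j] ne
    by (auto simp: ginv_def field_simps)
qed




definition riemv :: "(real \<Rightarrow> real) \<Rightarrow> 2 \<Rightarrow> 2 \<Rightarrow> 2 \<Rightarrow> 2 \<Rightarrow> real \<Rightarrow> real" where
  "riemv f l i j k x =
    (if l = 1 \<and> i = 1 \<and> j = 2 \<and> k = 2 then - deriv (deriv f) x / f x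
     else if l = 1 \<and> i = 2 \<and> j = 1 \<and> k = 2 then deriv (deriv f) x / f x
     else if l = 2 \<and> i = 1 \<and> j = 2 \<and> k = 1 then - (f x * deriv (deriv f) x)
     else if l = 2 \<and> i = 2 \<and> j = 1 \<and> k = 1 then f x * deriv (deriv f) x
     else 0)"

lemma pd_christ_gf:
  assumes fd: "\<And>x. DERIV f x :> deriv f x" and fpos: "\<And>x. f x > 0"
    and fdd: "\<And>x. DERIV (deriv f) x :> deriv (deriv f) x"
  shows "pd i (christ (gf f) k m n) p =
    (if i = 2 then
      (if k = 1 \<and> ((m = 1 \<and> n = 2) \<or> (m = 2 \<and> n = 1))
         then (deriv (deriv f) (p$2) * f (p$2) - deriv f (p$2) * deriv f (p$2)) / (f (p$2) * f (p$2))
       else if k = 2 \<and> m = 1 \<and> n = 1 then deriv f (p$2) * deriv f (p$2) + f (p$2) * deriv (deriv f) (p$2) else 0)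
     else 0)"
proof -
  define C where "C = (\<lambda>y. if k = 1 \<and> ((m = 1 \<and> n = 2) \<or> (m = 2 \<and> n = 1)) then deriv f y / f y
     else if k = 2 \<and> m = 1 \<and> n = 1 then f y * deriv f y else 0)"
  have e: "christ (gf f) k m n = (\<lambda>q. C (q$2))"
    by (rule ext) (simp add: christ_gf[OF fd fpos] C_def)
  have ne: "f (p$2) \<noteq> 0" using fpos[of "p$2"] by simp
  have d: "(C has_real_derivative
     (if k = 1 \<and> ((m = 1 \<and> n = 2) \<or> (m = 2 \<and> n = 1))
         then (deriv (deriv f) (p$2) * f (p$2) - deriv f (p$2) * deriv f (p$2)) / (f (p$2) * f (p$2))
       else if k = 2 \<and> m = 1 \<and> n = 1 then deriv f (p$2) * deriv f (p$2) + f (p$2) * deriv (deriv f) (p$2) else 0)) (at (p$2))"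
  proof (cases "k = 1 \<and> ((m = 1 \<and> n = 2) \<or> (m = 2 \<and> n = 1))")
    case True
    then have "C = (\<lambda>y. deriv f y / f y)" by (simp add: C_def)
    moreover have "((\<lambda>y. deriv f y / f y) has_real_derivative
        (deriv (deriv f) (p$2) * f (p$2) - deriv f (p$2) * deriv f (p$2)) / (f (p$2) * f (p$2))) (at (p$2))"
      by (rule derivative_eq_intros refl fd fdd ne | simp add: field_simps power2_eq_square)+
    ultimately show ?thesis using True by simp
  next
    case F: False
    show ?thesis
    proof (cases "k = 2 \<and> m = 1 \<and> n = 1")
      case True
      then have "C = (\<lambda>y. f y * deriv f y)" by (simp add: C_def)
      moreover have "((\<lambda>y. f y * deriv f y) has_real_derivative
          deriv f (p$2) * deriv f (p$2) + f (p$2) * deriv (deriv f) (p$2)) (at (p$2))"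
        by (rule derivative_eq_intros refl fd fdd | simp add: field_simps)+
      ultimately show ?thesis using True F by simp
    next
      case False
      then have "C = (\<lambda>y. 0)" using F unfolding C_def by (intro ext) (simp only: if_not_P[OF F] if_not_P[OF False] if_False)
      then show ?thesis by (simp only: if_not_P[OF F] if_not_P[OF False] DERIV_const)
    qed
  qed
  show ?thesis unfolding e pd_fun2[OF d] by auto
qed

lemma riem_gf:
  assumes fd: "\<And>x. DERIV f x :> deriv f x" and fpos: "\<And>x. f x > 0"
    and fdd: "\<And>x. DERIV (deriv f) x :> deriv (deriv f) x"
  shows "riem (gf f) l i j k p = riemv f l i j k (p$2)"
proof -
  have ne: "f (p$2) \<noteq> 0" using fpos[of "p$2"] by simp
  show ?thesis
    unfolding riem_def pd_christ_gf[OF fd fpos fdd] christ_gf[OF fd fpos] sum_2 riemv_def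
    using exhaust_2[of l] exhaust_2[of i] exhaust_2[of j] exhaust_2[of k] ne
    by (auto simp: field_simps)
qed




lemma vd_comp:
  assumes "(h has_vector_derivative h') F"
  shows "((\<lambda>s. h s $ k) has_real_derivative h' $ k) F"
proof -
  have "((\<lambda>s. h s $ k) has_derivative (\<lambda>x. (x *\<^sub>R h') $ k)) F"
    using bounded_linear.has_derivative[OF bounded_linear_vec_nth[of k] assms[unfolded has_vector_derivative_def]] .
  moreover have "(\<lambda>x. x * h' $ k) = (*) (h' $ k)" by (auto simp: mult.commute)
  ultimately show ?thesis unfolding has_field_derivative_def by simp
qed

lemma mvt_within:
  fixes q :: "real \<Rightarrow> real"
  assumes d: "\<And>s. s \<in> {0..b} \<Longrightarrow> (q has_real_derivative q' s) (at s within {0..b})"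
    and s: "0 \<le> s1" "s1 < s2" "s2 \<le> b"
  shows "\<exists>z. s1 < z \<and> z < s2 \<and> q s2 - q s1 = (s2 - s1) * q' z"
proof -
  have c: "continuous_on {0..b} q" by (rule DERIV_continuous_on[OF d])
  have c2: "continuous_on {s1..s2} q" using continuous_on_subset[OF c] s by auto
  have dz: "DERIV q z :> q' z" if "s1 < z" "z < s2" for z
  proof -
    have "at z within {0..b} = at z" using that s by (intro at_within_Icc_at) auto
    then show ?thesis using d[of z] that s by auto
  qed
  obtain l z where z: "s1 < z" "z < s2" "DERIV q z :> l" "q s2 - q s1 = (s2 - s1) * l"
    using MVT[OF s(2) c2] dz real_differentiable_def by blast
  have "l = q' z" using DERIV_unique[OF z(3) dz[OF z(1,2)]] .
  then show ?thesis using z by blast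
qed

lemma deriv_zero_const:
  fixes q :: "real \<Rightarrow> real"
  assumes d: "\<And>s. s \<in> {0..b} \<Longrightarrow> (q has_real_derivative 0) (at s within {0..b})"
  shows "\<exists>c. \<forall>s\<in>{0..b}. q s = c"
  using has_field_derivative_zero_constant[of "{0..b}" q] d by auto

lemma gronwall0:
  fixes E :: "real \<Rightarrow> real"
  assumes d: "\<And>s. s \<in> {0..b} \<Longrightarrow> (E has_real_derivative E' s) (at s within {0..b})"
    and le: "\<And>s. s \<in> {0..b} \<Longrightarrow> E' s \<le> C * E s"
    and nn: "\<And>s. s \<in> {0..b} \<Longrightarrow> E s \<ge> 0"
    and z: "E 0 = 0" and s: "s \<in> {0..b}"
  shows "E s = 0"
proof (cases "s = 0")
  case True then show ?thesis using z by simp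
next
  case False
  define G where "G = (\<lambda>s. E s * exp (- C * s))"
  have dG: "(G has_real_derivative (E' s - C * E s) * exp (- C * s)) (at s within {0..b})"
    if "s \<in> {0..b}" for s
    unfolding G_def
    by (rule derivative_eq_intros refl d[OF that] | simp add: algebra_simps)+
  obtain w where w: "0 < w" "w < s" "G s - G 0 = (s - 0) * ((E' w - C * E w) * exp (- C * w))"
    using mvt_within[OF dG, of 0 s] s False by auto
  have "(E' w - C * E w) * exp (- C * w) \<le> 0"
    using le[of w] w s by (intro mult_nonpos_nonneg) auto
  then have "G s \<le> 0" using w z by (simp add: G_def mult_nonneg_nonpos)
  then have "E s \<le> 0" unfolding G_def by (simp add: mult_le_0_iff)
  then show ?thesis using nn[OF s] by simp
qed

lemma wronskian:
  fixes \<psi> \<psi>1 \<phi> \<phi>1 k :: "real \<Rightarrow> real"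
  assumes d1: "\<And>s. s \<in> {0..b} \<Longrightarrow> (\<psi> has_real_derivative \<psi>1 s) (at s within {0..b})"
    and d2: "\<And>s. s \<in> {0..b} \<Longrightarrow> (\<psi>1 has_real_derivative k s * \<psi> s) (at s within {0..b})"
    and d3: "\<And>s. s \<in> {0..b} \<Longrightarrow> (\<phi> has_real_derivative \<phi>1 s) (at s within {0..b})"
    and d4: "\<And>s. s \<in> {0..b} \<Longrightarrow> (\<phi>1 has_real_derivative k s * \<phi> s) (at s within {0..b})"
    and nz: "\<And>s. s \<in> {0..b} \<Longrightarrow> \<phi> s \<noteq> 0"
    and s12: "s1 \<in> {0..b}" "s2 \<in> {0..b}" "s1 < s2" "\<psi> s1 = 0" "\<psi> s2 = 0"
    and s: "s \<in> {0..b}"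
  shows "\<psi> s = 0"
proof -
  have dW: "((\<lambda>s. \<psi>1 s * \<phi> s - \<psi> s * \<phi>1 s) has_real_derivative 0) (at s within {0..b})"
    if "s \<in> {0..b}" for s
    by (rule derivative_eq_intros refl d1[OF that] d2[OF that] d3[OF that] d4[OF that] | simp add: algebra_simps)+
  obtain W0 where W0: "\<And>s. s \<in> {0..b} \<Longrightarrow> \<psi>1 s * \<phi> s - \<psi> s * \<phi>1 s = W0"
    using deriv_zero_const[OF dW] by blast
  have dq: "((\<lambda>s. \<psi> s / \<phi> s) has_real_derivative W0 / (\<phi> s)^2) (at s within {0..b})"
    if "s \<in> {0..b}" for s
  proof -
    have "((\<lambda>s. \<psi> s / \<phi> s) has_real_derivative (\<psi>1 s * \<phi> s - \<psi> s * \<phi>1 s) / (\<phi> s * \<phi> s)) (at s within {0..b})"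
      by (rule derivative_eq_intros refl d1[OF that] d3[OF that] nz[OF that] | simp add: algebra_simps)+
    then show ?thesis using W0[OF that] by (simp add: power2_eq_square)
  qed
  obtain z where z: "s1 < z" "z < s2" "\<psi> s2 / \<phi> s2 - \<psi> s1 / \<phi> s1 = (s2 - s1) * (W0 / (\<phi> z)^2)"
    using mvt_within[OF dq, of s1 s2] s12 by auto
  have "W0 = 0" using z s12 nz[of z] by (simp add: field_simps)
  then have "\<exists>c. \<forall>s\<in>{0..b}. \<psi> s / \<phi> s = c" using dq by (intro deriv_zero_const) auto
  then obtain c where c: "\<And>s. s \<in> {0..b} \<Longrightarrow> \<psi> s / \<phi> s = c" by blast
  have "c = 0" using c[OF s12(1)] s12 by simp
  then show ?thesis using c[OF s] nz[OF s] by simp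
qed




lemma f1_x0:
  fixes f :: "real \<Rightarrow> real"
  assumes fd: "\<And>x. DERIV f x :> deriv f x" and fle: "\<And>y. f y \<le> f x0"
  shows "deriv f x0 = 0"
  using DERIV_local_max[OF fd[of x0], of 1] fle by auto

lemma f2_x0:
  fixes f :: "real \<Rightarrow> real"
  assumes fd: "\<And>x. DERIV f x :> deriv f x" and fle: "\<And>y. f y \<le> f x0"
    and fdd: "\<And>x. DERIV (deriv f) x :> deriv (deriv f) x"
  shows "deriv (deriv f) x0 \<le> 0"
proof (rule ccontr)
  assume "\<not> ?thesis"
  then obtain d where d: "d > 0" "\<And>h. h > 0 \<Longrightarrow> h < d \<Longrightarrow> deriv f x0 < deriv f (x0 + h)"
    using DERIV_pos_inc_right[OF fdd[of x0]] by force
  have f10: "deriv f x0 = 0" by (rule f1_x0[OF fd fle])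
  obtain z where z: "x0 < z" "z < x0 + d/2" "f (x0 + d/2) - f x0 = (x0 + d/2 - x0) * deriv f z"
    using MVT2[of x0 "x0 + d/2" f "deriv f"] fd d by auto
  have "deriv f z > 0" using d(2)[of "z - x0"] z f10 by auto
  then have "d * deriv f z > 0" using d by simp
  then have "f (x0 + d/2) > f x0" using z d by simp
  then show False using fle[of "x0 + d/2"] by simp
qed

lemma f1_lip:
  fixes f :: "real \<Rightarrow> real"
  assumes fd: "\<And>x. DERIV f x :> deriv f x" and fle: "\<And>y. f y \<le> f x0"
    and fdd: "\<And>x. DERIV (deriv f) x :> deriv (deriv f) x"
    and c2: "continuous_on UNIV (deriv (deriv f))"
  shows "\<exists>M\<ge>0. \<forall>y. \<bar>y\<bar> \<le> R \<longrightarrow> \<bar>deriv f y\<bar> \<le> M * \<bar>y - x0\<bar>"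
proof -
  define R' where "R' = max R \<bar>x0\<bar>"
  have cont: "continuous_on {-R'..R'} (deriv (deriv f))"
    using continuous_on_subset[OF c2] by auto
  have "bounded (deriv (deriv f) ` {-R'..R'})"
    by (rule compact_imp_bounded[OF compact_continuous_image[OF cont compact_Icc]])
  then obtain M where M: "M > 0" "\<And>y. y \<in> {-R'..R'} \<Longrightarrow> \<bar>deriv (deriv f) y\<bar> \<le> M"
    unfolding bounded_pos by auto
  have f10: "deriv f x0 = 0" by (rule f1_x0[OF fd fle])
  have "\<bar>deriv f y\<bar> \<le> M * \<bar>y - x0\<bar>" if y: "\<bar>y\<bar> \<le> R" for y
  proof (cases y x0 rule: linorder_cases)
    case less
    obtain z where z: "y < z" "z < x0" "deriv f x0 - deriv f y = (x0 - y) * deriv (deriv f) z"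
      using MVT2[OF less, of "deriv f" "deriv (deriv f)"] fdd by auto
    have "\<bar>deriv (deriv f) z\<bar> \<le> M" proof -
      have "R \<le> R'" "\<bar>x0\<bar> \<le> R'" unfolding R'_def by auto
      then have "z \<in> {-R'..R'}" using z y by (auto simp: abs_le_iff)
      then show ?thesis using M(2) by blast
    qed
    then have "\<bar>(x0 - y) * deriv (deriv f) z\<bar> \<le> (x0 - y) * M"
      using less by (simp add: abs_mult mult_left_mono)
    then show ?thesis using z f10 less by (simp add: mult.commute)
  next
    case equal then show ?thesis using f10 by simp
  next
    case greater
    obtain z where z: "x0 < z" "z < y" "deriv f y - deriv f x0 = (y - x0) * deriv (deriv f) z"
      using MVT2[OF greater, of "deriv f" "deriv (deriv f)"] fdd by auto
    have "\<bar>deriv (deriv f) z\<bar> \<le> M" proof -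
      have "R \<le> R'" "\<bar>x0\<bar> \<le> R'" unfolding R'_def by auto
      then have "z \<in> {-R'..R'}" using z y by (auto simp: abs_le_iff)
      then show ?thesis using M(2) by blast
    qed
    then have "\<bar>(y - x0) * deriv (deriv f) z\<bar> \<le> (y - x0) * M"
      using greater by (simp add: abs_mult mult_left_mono)
    then show ?thesis using z f10 greater by (simp add: mult.commute)
  qed
  then show ?thesis using M(1) by (intro exI[of _ M]) auto
qed




lemma core_derivs:
  fixes f :: "real \<Rightarrow> real" and x T Y P Q Pq Qq U V Uq Vq a bq cq :: "real \<Rightarrow> real"
  assumes anz: "a s \<noteq> 0"
    and da: "(a has_real_derivative bq s * Y s) (at s within S)"
    and dbq: "(bq has_real_derivative cq s * Y s) (at s within S)"
    and dx: "(x has_real_derivative Y s) (at s within S)"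
    and dT: "(T has_real_derivative - (2 * (bq s / a s) * T s * Y s)) (at s within S)"
    and dY: "(Y has_real_derivative - (a s * bq s * T s * T s)) (at s within S)"
    and dP: "(P has_real_derivative Pq s) (at s within S)"
    and dQ: "(Q has_real_derivative Qq s) (at s within S)"
    and Ud: "U s = Pq s + bq s / a s * (T s * Q s + Y s * P s)"
    and Vd: "V s = Qq s + a s * bq s * T s * P s"
    and dU: "(U has_real_derivative Uq s) (at s within S)"
    and dV: "(V has_real_derivative Vq s) (at s within S)"
    and Uqd: "Uq s = - (bq s / a s * (T s * V s + Y s * U s)) + cq s / a s * Y s * (Y s * P s - T s * Q s)"
    and Vqd: "Vq s = - (a s * bq s * T s * U s) + a s * cq s * T s * (Y s * P s - T s * Q s)"
  shows "((\<lambda>s. Q s * Y s - a s * a s * P s * T s) has_real_derivative V s * Y s - a s * a s * U s * T s) (at s within S)"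
    and "((\<lambda>s. V s * Y s - a s * a s * U s * T s) has_real_derivative 0) (at s within S)"
    and "((\<lambda>s. a s * (T s * Q s - Y s * P s)) has_real_derivative a s * (T s * V s - Y s * U s)) (at s within S)"
    and "((\<lambda>s. a s * (T s * V s - Y s * U s)) has_real_derivative
           (- (cq s / a s) * (a s * a s * T s * T s - Y s * Y s)) * (a s * (T s * Q s - Y s * P s))) (at s within S)"
    and "((\<lambda>s. a s * a s * T s) has_real_derivative 0) (at s within S)"
    and "((\<lambda>s. a s * a s * T s * T s - Y s * Y s) has_real_derivative 0) (at s within S)"
    and "((\<lambda>s. a s * Y s) has_real_derivative bq s * (Y s * Y s - a s * a s * T s * T s)) (at s within S)"
    and "((\<lambda>s. bq s * (Y s * Y s - a s * a s * T s * T s)) has_real_derivative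
           (- (cq s / a s) * (a s * a s * T s * T s - Y s * Y s)) * (a s * Y s)) (at s within S)"
proof -
  show "((\<lambda>s. Q s * Y s - a s * a s * P s * T s) has_real_derivative V s * Y s - a s * a s * U s * T s) (at s within S)"
    by (rule derivative_eq_intros refl da dP dQ dT dY | (unfold Ud Vd, insert anz, simp add: field_simps))+
  show "((\<lambda>s. V s * Y s - a s * a s * U s * T s) has_real_derivative 0) (at s within S)"
    by (rule derivative_eq_intros refl da dU dV dT dY | (unfold Uqd Vqd, insert anz, simp add: field_simps))+
  show "((\<lambda>s. a s * (T s * Q s - Y s * P s)) has_real_derivative a s * (T s * V s - Y s * U s)) (at s within S)"
    by (rule derivative_eq_intros refl da dP dQ dT dY | (unfold Ud Vd, insert anz, simp add: field_simps))+
  show "((\<lambda>s. a s * (T s * V s - Y s * U s)) has_real_derivative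
           (- (cq s / a s) * (a s * a s * T s * T s - Y s * Y s)) * (a s * (T s * Q s - Y s * P s))) (at s within S)"
    by (rule derivative_eq_intros refl da dU dV dT dY | (unfold Uqd Vqd, insert anz, simp add: field_simps))+
  show "((\<lambda>s. a s * a s * T s) has_real_derivative 0) (at s within S)"
    by (rule derivative_eq_intros refl da dT | (insert anz, simp add: field_simps))+
  show "((\<lambda>s. a s * a s * T s * T s - Y s * Y s) has_real_derivative 0) (at s within S)"
    by (rule derivative_eq_intros refl da dT dY | (insert anz, simp add: field_simps))+
  show "((\<lambda>s. a s * Y s) has_real_derivative bq s * (Y s * Y s - a s * a s * T s * T s)) (at s within S)"
    by (rule derivative_eq_intros refl da dY | (insert anz, simp add: field_simps))+
  show "((\<lambda>s. bq s * (Y s * Y s - a s * a s * T s * T s)) has_real_derivative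
           (- (cq s / a s) * (a s * a s * T s * T s - Y s * Y s)) * (a s * Y s)) (at s within S)"
    by (rule derivative_eq_intros refl da dbq dT dY | (insert anz, simp add: field_simps))+
qed




lemma cont_bound:
  fixes h :: "real \<Rightarrow> real"
  assumes "\<And>s. s \<in> {0..b} \<Longrightarrow> (h has_real_derivative h' s) (at s within {0..b})"
  shows "\<exists>B>0. \<forall>s\<in>{0..b}. \<bar>h s\<bar> \<le> B"
proof -
  have "continuous_on {0..b} h" by (rule DERIV_continuous_on[OF assms])
  then have "bounded (h ` {0..b})" by (rule compact_imp_bounded[OF compact_continuous_image[OF _ compact_Icc]])
  then show ?thesis unfolding bounded_pos by auto
qed

lemma core:
  fixes f :: "real \<Rightarrow> real" and x T Y P Q P1 Q1 U V U1 V1 :: "real \<Rightarrow> real"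
  assumes fd: "\<And>x. DERIV f x :> deriv f x"
    and fdd: "\<And>x. DERIV (deriv f) x :> deriv (deriv f) x"
    and c2: "continuous_on UNIV (deriv (deriv f))"
    and fpos: "\<And>y. f y > 0" and fle: "\<And>y. f y \<le> f x0"
    and b: "b > 0"
    and dx: "\<And>s. s \<in> {0..b} \<Longrightarrow> (x has_real_derivative Y s) (at s within {0..b})"
    and dT: "\<And>s. s \<in> {0..b} \<Longrightarrow> (T has_real_derivative - (2 * (deriv f (x s) / f (x s)) * T s * Y s)) (at s within {0..b})"
    and dY: "\<And>s. s \<in> {0..b} \<Longrightarrow> (Y has_real_derivative - (f (x s) * deriv f (x s) * T s * T s)) (at s within {0..b})"
    and x0: "x 0 = x0"
    and tl: "\<And>s. s \<in> {0..b} \<Longrightarrow> Y s * Y s < f (x s) * f (x s) * T s * T s"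
    and dP: "\<And>s. s \<in> {0..b} \<Longrightarrow> (P has_real_derivative P1 s) (at s within {0..b})"
    and dQ: "\<And>s. s \<in> {0..b} \<Longrightarrow> (Q has_real_derivative Q1 s) (at s within {0..b})"
    and Ud: "\<And>s. s \<in> {0..b} \<Longrightarrow> U s = P1 s + deriv f (x s) / f (x s) * (T s * Q s + Y s * P s)"
    and Vd: "\<And>s. s \<in> {0..b} \<Longrightarrow> V s = Q1 s + f (x s) * deriv f (x s) * T s * P s"
    and dU: "\<And>s. s \<in> {0..b} \<Longrightarrow> (U has_real_derivative U1 s) (at s within {0..b})"
    and dV: "\<And>s. s \<in> {0..b} \<Longrightarrow> (V has_real_derivative V1 s) (at s within {0..b})"
    and U1d: "\<And>s. s \<in> {0..b} \<Longrightarrow> U1 s = - (deriv f (x s) / f (x s) * (T s * V s + Y s * U s))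
         + deriv (deriv f) (x s) / f (x s) * Y s * (Y s * P s - T s * Q s)"
    and V1d: "\<And>s. s \<in> {0..b} \<Longrightarrow> V1 s = - (f (x s) * deriv f (x s) * T s * U s)
         + f (x s) * deriv (deriv f) (x s) * T s * (Y s * P s - T s * Q s)"
    and s12: "s1 \<in> {0..b}" "s2 \<in> {0..b}" "s1 < s2" "P s1 = 0" "Q s1 = 0" "P s2 = 0" "Q s2 = 0"
    and s: "s \<in> {0..b}"
  shows "P s = 0 \<and> Q s = 0"
proof -
  define k where "k = (\<lambda>s. - (deriv (deriv f) (x s) / f (x s)) * (f (x s) * f (x s) * T s * T s - Y s * Y s))"
  have anz: "f (x s) \<noteq> 0" for s using fpos by (metis less_irrefl)
  have da: "((\<lambda>s. f (x s)) has_real_derivative deriv f (x s) * Y s) (at s within {0..b})" if "s \<in> {0..b}" for s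
    by (rule DERIV_chain2[OF fd dx[OF that]])
  have da1: "((\<lambda>s. deriv f (x s)) has_real_derivative deriv (deriv f) (x s) * Y s) (at s within {0..b})" if "s \<in> {0..b}" for s
    by (rule DERIV_chain2[OF fdd dx[OF that]])
  have dA: "((\<lambda>s. Q s * Y s - f (x s) * f (x s) * P s * T s) has_real_derivative V s * Y s - f (x s) * f (x s) * U s * T s) (at s within {0..b})" if "s \<in> {0..b}" for s
    using core_derivs(1)[where a="\<lambda>s. f (x s)" and bq="\<lambda>s. deriv f (x s)" and cq="\<lambda>s. deriv (deriv f) (x s)" and x=x and T=T and Y=Y and P=P and Q=Q and U=U and V=V and Pq=P1 and Qq=Q1 and Uq=U1 and Vq=V1 and s=s and S="{0..b}", OF anz[of s] da[OF that] da1[OF that] dx[OF that] dT[OF that] dY[OF that] dP[OF that] dQ[OF that] Ud[OF that] Vd[OF that] dU[OF that] dV[OF that] U1d[OF that] V1d[OF that]] unfolding k_def .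
  have dA1: "((\<lambda>s. V s * Y s - f (x s) * f (x s) * U s * T s) has_real_derivative 0) (at s within {0..b})" if "s \<in> {0..b}" for s
    using core_derivs(2)[where a="\<lambda>s. f (x s)" and bq="\<lambda>s. deriv f (x s)" and cq="\<lambda>s. deriv (deriv f) (x s)" and x=x and T=T and Y=Y and P=P and Q=Q and U=U and V=V and Pq=P1 and Qq=Q1 and Uq=U1 and Vq=V1 and s=s and S="{0..b}", OF anz[of s] da[OF that] da1[OF that] dx[OF that] dT[OF that] dY[OF that] dP[OF that] dQ[OF that] Ud[OF that] Vd[OF that] dU[OF that] dV[OF that] U1d[OF that] V1d[OF that]] unfolding k_def .
  have dpsi: "((\<lambda>s. f (x s) * (T s * Q s - Y s * P s)) has_real_derivative f (x s) * (T s * V s - Y s * U s)) (at s within {0..b})" if "s \<in> {0..b}" for s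
    using core_derivs(3)[where a="\<lambda>s. f (x s)" and bq="\<lambda>s. deriv f (x s)" and cq="\<lambda>s. deriv (deriv f) (x s)" and x=x and T=T and Y=Y and P=P and Q=Q and U=U and V=V and Pq=P1 and Qq=Q1 and Uq=U1 and Vq=V1 and s=s and S="{0..b}", OF anz[of s] da[OF that] da1[OF that] dx[OF that] dT[OF that] dY[OF that] dP[OF that] dQ[OF that] Ud[OF that] Vd[OF that] dU[OF that] dV[OF that] U1d[OF that] V1d[OF that]] unfolding k_def .
  have dpsi1: "((\<lambda>s. f (x s) * (T s * V s - Y s * U s)) has_real_derivative k s * (f (x s) * (T s * Q s - Y s * P s))) (at s within {0..b})" if "s \<in> {0..b}" for s
    using core_derivs(4)[where a="\<lambda>s. f (x s)" and bq="\<lambda>s. deriv f (x s)" and cq="\<lambda>s. deriv (deriv f) (x s)" and x=x and T=T and Y=Y and P=P and Q=Q and U=U and V=V and Pq=P1 and Qq=Q1 and Uq=U1 and Vq=V1 and s=s and S="{0..b}", OF anz[of s] da[OF that] da1[OF that] dx[OF that] dT[OF that] dY[OF that] dP[OF that] dQ[OF that] Ud[OF that] Vd[OF that] dU[OF that] dV[OF that] U1d[OF that] V1d[OF that]] unfolding k_def .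
  have dE: "((\<lambda>s. f (x s) * f (x s) * T s) has_real_derivative 0) (at s within {0..b})" if "s \<in> {0..b}" for s
    using core_derivs(5)[where a="\<lambda>s. f (x s)" and bq="\<lambda>s. deriv f (x s)" and cq="\<lambda>s. deriv (deriv f) (x s)" and x=x and T=T and Y=Y and P=P and Q=Q and U=U and V=V and Pq=P1 and Qq=Q1 and Uq=U1 and Vq=V1 and s=s and S="{0..b}", OF anz[of s] da[OF that] da1[OF that] dx[OF that] dT[OF that] dY[OF that] dP[OF that] dQ[OF that] Ud[OF that] Vd[OF that] dU[OF that] dV[OF that] U1d[OF that] V1d[OF that]] unfolding k_def .
  have dC: "((\<lambda>s. f (x s) * f (x s) * T s * T s - Y s * Y s) has_real_derivative 0) (at s within {0..b})" if "s \<in> {0..b}" for s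
    using core_derivs(6)[where a="\<lambda>s. f (x s)" and bq="\<lambda>s. deriv f (x s)" and cq="\<lambda>s. deriv (deriv f) (x s)" and x=x and T=T and Y=Y and P=P and Q=Q and U=U and V=V and Pq=P1 and Qq=Q1 and Uq=U1 and Vq=V1 and s=s and S="{0..b}", OF anz[of s] da[OF that] da1[OF that] dx[OF that] dT[OF that] dY[OF that] dP[OF that] dQ[OF that] Ud[OF that] Vd[OF that] dU[OF that] dV[OF that] U1d[OF that] V1d[OF that]] unfolding k_def .
  have dphi: "((\<lambda>s. f (x s) * Y s) has_real_derivative deriv f (x s) * (Y s * Y s - f (x s) * f (x s) * T s * T s)) (at s within {0..b})" if "s \<in> {0..b}" for s
    using core_derivs(7)[where a="\<lambda>s. f (x s)" and bq="\<lambda>s. deriv f (x s)" and cq="\<lambda>s. deriv (deriv f) (x s)" and x=x and T=T and Y=Y and P=P and Q=Q and U=U and V=V and Pq=P1 and Qq=Q1 and Uq=U1 and Vq=V1 and s=s and S="{0..b}", OF anz[of s] da[OF that] da1[OF that] dx[OF that] dT[OF that] dY[OF that] dP[OF that] dQ[OF that] Ud[OF that] Vd[OF that] dU[OF that] dV[OF that] U1d[OF that] V1d[OF that]] unfolding k_def .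
  have dphi1: "((\<lambda>s. deriv f (x s) * (Y s * Y s - f (x s) * f (x s) * T s * T s)) has_real_derivative k s * (f (x s) * Y s)) (at s within {0..b})" if "s \<in> {0..b}" for s
    using core_derivs(8)[where a="\<lambda>s. f (x s)" and bq="\<lambda>s. deriv f (x s)" and cq="\<lambda>s. deriv (deriv f) (x s)" and x=x and T=T and Y=Y and P=P and Q=Q and U=U and V=V and Pq=P1 and Qq=Q1 and Uq=U1 and Vq=V1 and s=s and S="{0..b}", OF anz[of s] da[OF that] da1[OF that] dx[OF that] dT[OF that] dY[OF that] dP[OF that] dQ[OF that] Ud[OF that] Vd[OF that] dU[OF that] dV[OF that] U1d[OF that] V1d[OF that]] unfolding k_def .
  (* the tangential component is affine, hence zero *)
  obtain c0 where c0: "\<And>s. s \<in> {0..b} \<Longrightarrow> V s * Y s - f (x s) * f (x s) * U s * T s = c0"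
    using deriv_zero_const[OF dA1] by blast
  have dA2: "((\<lambda>s. (Q s * Y s - f (x s) * f (x s) * P s * T s) - c0 * s) has_real_derivative 0) (at s within {0..b})"
    if "s \<in> {0..b}" for s
    by (rule derivative_eq_intros refl dA[OF that] | simp add: c0[OF that])+
  obtain c1 where c1: "\<And>s. s \<in> {0..b} \<Longrightarrow> (Q s * Y s - f (x s) * f (x s) * P s * T s) - c0 * s = c1"
    using deriv_zero_const[OF dA2] by blast
  have "- c0 * s1 = c1" "- c0 * s2 = c1" using c1[OF s12(1)] c1[OF s12(2)] s12 by auto
  then have "c0 = 0" "c1 = 0" using s12(3) by auto
  then have Az: "Q s * Y s - f (x s) * f (x s) * P s * T s = 0" if "s \<in> {0..b}" for s
    using c1[OF that] by simp
  have "\<exists>\<phi> \<phi>1. (\<forall>s\<in>{0..b}. (\<phi> has_real_derivative \<phi>1 s) (at s within {0..b})) \<and>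
          (\<forall>s\<in>{0..b}. (\<phi>1 has_real_derivative k s * \<phi> s) (at s within {0..b})) \<and>
          (\<forall>s\<in>{0..b}. \<phi> s \<noteq> 0)"
  proof (cases "Y 0 = 0")
    case False
    obtain Ec where Ec: "\<And>s. s \<in> {0..b} \<Longrightarrow> f (x s) * f (x s) * T s = Ec"
      using deriv_zero_const[OF dE] by blast
    obtain Cc where Cc: "\<And>s. s \<in> {0..b} \<Longrightarrow> f (x s) * f (x s) * T s * T s - Y s * Y s = Cc"
      using deriv_zero_const[OF dC] by blast
    have Yeq: "Y s * Y s = Ec * Ec / (f (x s) * f (x s)) - Cc" if "s \<in> {0..b}" for s
    proof -
      have "f (x s) * f (x s) * T s * T s = Ec * Ec / (f (x s) * f (x s))"
        using Ec[OF that] anz[of s] by (auto simp: field_simps)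
      then show ?thesis using Cc[OF that] by simp
    qed
    have 0: "0 \<in> {0..b}" using b by simp
    have nz: "Y s \<noteq> 0" if s: "s \<in> {0..b}" for s
    proof -
      have fp: "0 < f (x s) * f (x s)" using fpos[of "x s"] by simp
      have "f (x s) * f (x s) \<le> f x0 * f x0"
        using fle[of "x s"] fpos[of "x s"] by (intro mult_mono) auto
      then have "Ec * Ec / (f x0 * f x0) \<le> Ec * Ec / (f (x s) * f (x s))"
        using fp fpos[of x0] by (intro divide_left_mono) auto
      then have "Y 0 * Y 0 \<le> Y s * Y s" using Yeq[OF s] Yeq[OF 0] x0 by simp
      moreover have "Y 0 * Y 0 > 0" using False by (auto simp: zero_less_mult_iff linorder_neq_iff)
      ultimately show ?thesis by auto
    qed
    show ?thesis
      using dphi dphi1 nz anz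
      by (intro exI[of _ "\<lambda>s. f (x s) * Y s"] exI[of _ "\<lambda>s. deriv f (x s) * (Y s * Y s - f (x s) * f (x s) * T s * T s)"]) auto
  next
    case True
    obtain Bx where Bx: "\<And>s. s \<in> {0..b} \<Longrightarrow> \<bar>x s\<bar> \<le> Bx"
      using cont_bound[OF dx] by blast
    obtain BT where BTp: "BT > 0" and BT: "\<And>s. s \<in> {0..b} \<Longrightarrow> \<bar>T s\<bar> \<le> BT"
      using cont_bound[OF dT] by blast
    obtain M where M: "M \<ge> 0" "\<And>y. \<bar>y\<bar> \<le> Bx \<Longrightarrow> \<bar>deriv f y\<bar> \<le> M * \<bar>y - x0\<bar>"
      using f1_lip[OF fd fle fdd c2, of Bx] by blast
    define K where "K = f x0 * BT * BT * M"
    have K: "K \<ge> 0" unfolding K_def using M fpos[of x0] BTp by simp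
    define E where "E = (\<lambda>s. (x s - x0) * (x s - x0) + Y s * Y s)"
    have dEg: "(E has_real_derivative 2 * (x s - x0) * Y s + 2 * Y s * (- (f (x s) * deriv f (x s) * T s * T s)))
       (at s within {0..b})" if "s \<in> {0..b}" for s
      unfolding E_def by (rule derivative_eq_intros refl dx[OF that] dY[OF that] | simp add: algebra_simps)+
    have Ele: "2 * (x s - x0) * Y s + 2 * Y s * (- (f (x s) * deriv f (x s) * T s * T s)) \<le> (1 + K) * E s"
      if s: "s \<in> {0..b}" for s
    proof -
      define u where "u = \<bar>x s - x0\<bar>"
      define v where "v = \<bar>Y s\<bar>"
      have u: "u \<ge> 0" and v: "v \<ge> 0" unfolding u_def v_def by auto
      have h1: "\<bar>deriv f (x s)\<bar> \<le> M * u" unfolding u_def using M(2) Bx[OF s] by blast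
      have h2': "\<bar>T s\<bar> * \<bar>T s\<bar> \<le> BT * BT" using BT[OF s] by (intro mult_mono) auto
      have h2: "T s * T s \<le> BT * BT" using h2' by (simp add: abs_mult_self_eq)
      have h3: "f (x s) \<le> f x0" "0 < f (x s)" using fle fpos by auto
      have "\<bar>f (x s) * deriv f (x s) * T s * T s\<bar> = f (x s) * \<bar>deriv f (x s)\<bar> * (T s * T s)"
        using h3 by (simp add: abs_mult)
      also have "\<dots> \<le> f x0 * (M * u) * (BT * BT)"
      proof -
        have A: "f (x s) * \<bar>deriv f (x s)\<bar> \<le> f x0 * (M * u)"
          using h1 h3 u M(1) by (intro mult_mono) auto
        have B: "0 \<le> T s * T s" by simp
        have C: "0 \<le> f x0 * (M * u)" using h3 u M(1) by simp
        show ?thesis using mult_mono[OF A h2 C B] .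
      qed
      finally have h4: "\<bar>f (x s) * deriv f (x s) * T s * T s\<bar> \<le> K * u" unfolding K_def by (simp add: algebra_simps)
      have "2 * (x s - x0) * Y s + 2 * Y s * (- (f (x s) * deriv f (x s) * T s * T s))
           \<le> 2 * u * v + 2 * v * \<bar>f (x s) * deriv f (x s) * T s * T s\<bar>"
      proof -
        have "(x s - x0) * Y s \<le> u * v" unfolding u_def v_def by (metis abs_ge_self abs_mult)
        moreover have "- (Y s * (f (x s) * deriv f (x s) * T s * T s)) \<le> v * \<bar>f (x s) * deriv f (x s) * T s * T s\<bar>"
          unfolding v_def by (metis abs_ge_minus_self abs_mult)
        ultimately show ?thesis by linarith
      qed
      also have "\<dots> \<le> 2 * u * v + 2 * v * (K * u)" using h4 v by (simp add: mult_left_mono)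
      also have "\<dots> = (1 + K) * (2 * u * v)" by (simp add: algebra_simps)
      also have "\<dots> \<le> (1 + K) * (u * u + v * v)"
      proof -
        have "2 * u * v \<le> u * u + v * v" using sum_squares_bound[of u v] by (simp add: power2_eq_square)
        then show ?thesis using K by (intro mult_left_mono) auto
      qed
      also have "\<dots> = (1 + K) * E s" unfolding E_def u_def v_def by (simp add: abs_mult_self_eq)
      finally show ?thesis .
    qed
    have E0: "E s = 0" if "s \<in> {0..b}" for s
      using gronwall0[where E=E, OF dEg Ele _ _ that] True x0 unfolding E_def by auto
    have xs: "x s = x0" and Ys: "Y s = 0" if "s \<in> {0..b}" for s
      using E0[OF that] unfolding E_def by (auto simp: add_nonneg_eq_0_iff)
    obtain Cc where Cc: "\<And>s. s \<in> {0..b} \<Longrightarrow> f (x s) * f (x s) * T s * T s - Y s * Y s = Cc"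
      using deriv_zero_const[OF dC] by blast
    have 0: "0 \<in> {0..b}" using b by simp
    have Ccpos: "Cc > 0" using Cc[OF 0] tl[OF 0] by simp
    define \<kappa> where "\<kappa> = - (deriv (deriv f) x0 / f x0) * Cc"
    have kap: "\<kappa> \<ge> 0" unfolding \<kappa>_def using f2_x0[OF fd fle fdd] fpos[of x0] Ccpos
      by (simp add: divide_nonpos_pos mult_nonpos_nonneg)
    have ks: "k s = \<kappa>" if "s \<in> {0..b}" for s
      using Cc[OF that] xs[OF that] Ys[OF that] unfolding k_def \<kappa>_def by simp
    have d1: "((\<lambda>s. cosh (sqrt \<kappa> * s)) has_real_derivative sqrt \<kappa> * sinh (sqrt \<kappa> * s)) (at s within {0..b})" for s
      by (rule derivative_eq_intros refl | simp)+
    have d2: "((\<lambda>s. sqrt \<kappa> * sinh (sqrt \<kappa> * s)) has_real_derivative k s * cosh (sqrt \<kappa> * s)) (at s within {0..b})"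
      if "s \<in> {0..b}" for s
      using ks[OF that] kap by (rule_tac derivative_eq_intros | simp)+
    show ?thesis using d1 d2
      by (intro exI[of _ "\<lambda>s. cosh (sqrt \<kappa> * s)"] exI[of _ "\<lambda>s. sqrt \<kappa> * sinh (sqrt \<kappa> * s)"]) auto
  qed
  then obtain \<phi> \<phi>1 where ph: "\<And>s. s \<in> {0..b} \<Longrightarrow> (\<phi> has_real_derivative \<phi>1 s) (at s within {0..b})"
      "\<And>s. s \<in> {0..b} \<Longrightarrow> (\<phi>1 has_real_derivative k s * \<phi> s) (at s within {0..b})"
      "\<And>s. s \<in> {0..b} \<Longrightarrow> \<phi> s \<noteq> 0" by blast
  have psi0: "f (x s) * (T s * Q s - Y s * P s) = 0" if "s \<in> {0..b}" for s
    by (rule wronskian[OF dpsi dpsi1 ph s12(1-3) _ _ that]) (use s12 in auto)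
  have e1: "Q s * Y s = f (x s) * f (x s) * P s * T s" using Az[OF s] by simp
  have e2: "T s * Q s = Y s * P s" using psi0[OF s] anz[of s] by simp
  have "P s * (Y s * Y s) = P s * (f (x s) * f (x s) * T s * T s)"
  proof -
    have "P s * (Y s * Y s) = Y s * (T s * Q s)" using e2 by (simp add: algebra_simps)
    also have "\<dots> = T s * (Q s * Y s)" by (simp add: algebra_simps)
    also have "\<dots> = P s * (f (x s) * f (x s) * T s * T s)" using e1 by (simp add: algebra_simps)
    finally show ?thesis .
  qed
  then have P0: "P s = 0" using tl[OF s] by auto
  then have "Q s * Y s = 0" "T s * Q s = 0" using e1 e2 by auto
  moreover have "Y s \<noteq> 0 \<or> T s \<noteq> 0" using tl[OF s] by auto
  ultimately show ?thesis using P0 by auto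
qed




theorem lemma3p1:
  fixes f :: "real \<Rightarrow> real" and t0 x0 :: real
  assumes "smooth_fun f"
    and "\<exists>a c. 0 < a \<and> (\<forall>x. a \<le> f x \<and> f x \<le> c)"
    and "f x0 = (SUP x. f x)"
  shows "timelike_pole (gf f) (vector [t0, x0])"
proof -
  have sm: "\<And>n x. ((deriv ^^ n) f) differentiable (at x)" using assms(1) unfolding smooth_fun_def by blast
  have fd: "\<And>x. DERIV f x :> deriv f x"
    using sm[of 0] by (simp add: DERIV_deriv_iff_real_differentiable)
  have fdd: "\<And>x. DERIV (deriv f) x :> deriv (deriv f) x"
    using sm[of 1] by (simp add: DERIV_deriv_iff_real_differentiable)
  have c2: "continuous_on UNIV (deriv (deriv f))"
  proof -
    have "\<And>x. isCont (deriv (deriv f)) x"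
      using sm[of 2] by (simp add: differentiable_imp_continuous_within numeral_2_eq_2)
    then show ?thesis by (simp add: continuous_at_imp_continuous_on)
  qed
  obtain la c where lc: "0 < la" "\<And>x. la \<le> f x \<and> f x \<le> c" using assms(2) by blast
  have fpos: "\<And>y. f y > 0" using lc by (metis less_le_trans)
  have fle: "\<And>y. f y \<le> f x0"
  proof -
    fix y
    have "bdd_above (range f)" using lc by (auto intro!: bdd_aboveI[of _ c])
    then show "f y \<le> f x0" unfolding assms(3) by (rule cSUP_upper[OF UNIV_I])
  qed
  show ?thesis
    unfolding timelike_pole_def
  proof (intro allI impI notI)
    fix \<gamma> b
    assume H: "0 < b \<and> timelike_geodesic (gf f) \<gamma> b \<and> \<gamma> 0 = vector [t0, x0]"
    assume "\<exists>s1 s2. conjugate_pair (gf f) \<gamma> b s1 s2"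
    then obtain s1 s2 where cp: "conjugate_pair (gf f) \<gamma> b s1 s2" by blast
    have b: "b > 0" using H by simp
    obtain \<gamma>1 \<gamma>2 where geo: "\<And>s. s \<in> {0..b} \<Longrightarrow>
         (\<gamma> has_vector_derivative \<gamma>1 s) (at s within {0..b}) \<and>
         (\<gamma>1 has_vector_derivative \<gamma>2 s) (at s within {0..b}) \<and>
         (\<forall>k. \<gamma>2 s $ k + (\<Sum>i\<in>UNIV. \<Sum>j\<in>UNIV. christ (gf f) k i j (\<gamma> s) * \<gamma>1 s $ i * \<gamma>1 s $ j) = 0)"
      using H unfolding timelike_geodesic_def geodesic_on_def by blast
    have vel: "vel \<gamma> b s = \<gamma>1 s" if "s \<in> {0..b}" for s
      unfolding vel_def using vector_derivative_within_closed_interval[OF b that] geo[OF that] by blast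
    have tlg: "gform (gf f) (\<gamma> s) (vel \<gamma> b s) (vel \<gamma> b s) < 0" if "s \<in> {0..b}" for s
      using H that unfolding timelike_geodesic_def by blast
    obtain J where J: "jacobi_field (gf f) \<gamma> b J" "J s1 = 0" "J s2 = 0" "\<exists>s\<in>{0..b}. J s \<noteq> 0"
      and s12: "s1 \<in> {0..b}" "s2 \<in> {0..b}" "s1 \<noteq> s2"
      using cp unfolding conjugate_pair_def by blast
    obtain J1 W1 where jac: "\<And>s. s \<in> {0..b} \<Longrightarrow>
     (J has_vector_derivative J1 s) (at s within {0..b}) \<and>
     (covd (gf f) \<gamma> b J1 J has_vector_derivative W1 s) (at s within {0..b}) \<and>
     (\<forall>l. W1 s $ l
        + (\<Sum>i\<in>UNIV. \<Sum>j\<in>UNIV. christ (gf f) l i j (\<gamma> s) * vel \<gamma> b s $ i * covd (gf f) \<gamma> b J1 J s $ j)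
        + (\<Sum>i\<in>UNIV. \<Sum>j\<in>UNIV. \<Sum>k\<in>UNIV. riem (gf f) l i j k (\<gamma> s) * J s $ i * vel \<gamma> b s $ j * vel \<gamma> b s $ k)
        = 0)"
      using J(1) unfolding jacobi_field_def by blast
    define x where "x = (\<lambda>s. \<gamma> s $ 2)"
    define T where "T = (\<lambda>s. \<gamma>1 s $ 1)"
    define Y where "Y = (\<lambda>s. \<gamma>1 s $ 2)"
    define P where "P = (\<lambda>s. J s $ 1)"
    define Q where "Q = (\<lambda>s. J s $ 2)"
    define P1 where "P1 = (\<lambda>s. J1 s $ 1)"
    define Q1 where "Q1 = (\<lambda>s. J1 s $ 2)"
    define U where "U = (\<lambda>s. covd (gf f) \<gamma> b J1 J s $ 1)"
    define V where "V = (\<lambda>s. covd (gf f) \<gamma> b J1 J s $ 2)"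
    define U1 where "U1 = (\<lambda>s. W1 s $ 1)"
    define V1 where "V1 = (\<lambda>s. W1 s $ 2)"
    note cg = christ_gf[OF fd fpos]
    note rg = riem_gf[OF fd fpos fdd]
    have dx: "(x has_real_derivative Y s) (at s within {0..b})" if "s \<in> {0..b}" for s
      unfolding x_def Y_def using vd_comp geo[OF that] by blast
    have dT: "(T has_real_derivative - (2 * (deriv f (x s) / f (x s)) * T s * Y s)) (at s within {0..b})"
      if "s \<in> {0..b}" for s
    proof -
      have e: "\<gamma>2 s $ 1 + (\<Sum>i\<in>UNIV. \<Sum>j\<in>UNIV. christ (gf f) 1 i j (\<gamma> s) * \<gamma>1 s $ i * \<gamma>1 s $ j) = 0"
        using geo[OF that] by blast
      have "\<gamma>2 s $ 1 = - (2 * (deriv f (x s) / f (x s)) * T s * Y s)"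
        using e unfolding cg sum_2 x_def T_def Y_def by (simp add: algebra_simps)
      then show ?thesis unfolding T_def using vd_comp[of \<gamma>1 "\<gamma>2 s"] geo[OF that] by metis
    qed
    have dY: "(Y has_real_derivative - (f (x s) * deriv f (x s) * T s * T s)) (at s within {0..b})"
      if "s \<in> {0..b}" for s
    proof -
      have e: "\<gamma>2 s $ 2 + (\<Sum>i\<in>UNIV. \<Sum>j\<in>UNIV. christ (gf f) 2 i j (\<gamma> s) * \<gamma>1 s $ i * \<gamma>1 s $ j) = 0"
        using geo[OF that] by blast
      have "\<gamma>2 s $ 2 = - (f (x s) * deriv f (x s) * T s * T s)"
        using e unfolding cg sum_2 x_def T_def Y_def by (simp add: algebra_simps)
      then show ?thesis unfolding Y_def using vd_comp[of \<gamma>1 "\<gamma>2 s"] geo[OF that] by metis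
    qed
    have x0: "x 0 = x0" using H unfolding x_def by simp
    have tl: "Y s * Y s < f (x s) * f (x s) * T s * T s" if "s \<in> {0..b}" for s
      using tlg[OF that] unfolding vel[OF that] gform_def sum_2 gf_def x_def T_def Y_def by simp
    have dP: "(P has_real_derivative P1 s) (at s within {0..b})" if "s \<in> {0..b}" for s
      unfolding P_def P1_def using vd_comp jac[OF that] by blast
    have dQ: "(Q has_real_derivative Q1 s) (at s within {0..b})" if "s \<in> {0..b}" for s
      unfolding Q_def Q1_def using vd_comp jac[OF that] by blast
    have dU: "(U has_real_derivative U1 s) (at s within {0..b})" if "s \<in> {0..b}" for s
      unfolding U_def U1_def using vd_comp jac[OF that] by blast
    have dV: "(V has_real_derivative V1 s) (at s within {0..b})" if "s \<in> {0..b}" for s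
      unfolding V_def V1_def using vd_comp jac[OF that] by blast
    have Ud: "U s = P1 s + deriv f (x s) / f (x s) * (T s * Q s + Y s * P s)" if "s \<in> {0..b}" for s
      unfolding U_def covd_def vel[OF that] cg sum_2 x_def T_def Y_def P_def Q_def P1_def
      by (simp add: algebra_simps)
    have Vd: "V s = Q1 s + f (x s) * deriv f (x s) * T s * P s" if "s \<in> {0..b}" for s
      unfolding V_def covd_def vel[OF that] cg sum_2 x_def T_def Y_def P_def Q_def Q1_def
      by (simp add: algebra_simps)
    have U1d: "U1 s = - (deriv f (x s) / f (x s) * (T s * V s + Y s * U s))
         + deriv (deriv f) (x s) / f (x s) * Y s * (Y s * P s - T s * Q s)" if "s \<in> {0..b}" for s
    proof -
      have e: "W1 s $ 1
        + (\<Sum>i\<in>UNIV. \<Sum>j\<in>UNIV. christ (gf f) 1 i j (\<gamma> s) * vel \<gamma> b s $ i * covd (gf f) \<gamma> b J1 J s $ j)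
        + (\<Sum>i\<in>UNIV. \<Sum>j\<in>UNIV. \<Sum>k\<in>UNIV. riem (gf f) 1 i j k (\<gamma> s) * J s $ i * vel \<gamma> b s $ j * vel \<gamma> b s $ k)
        = 0" using jac[OF that] by blast
      show ?thesis using e unfolding vel[OF that] cg rg sum_2 riemv_def U1_def U_def V_def x_def T_def Y_def P_def Q_def
        using fpos[of "\<gamma> s $ 2"] by (simp add: field_simps)
    qed
    have V1d: "V1 s = - (f (x s) * deriv f (x s) * T s * U s)
         + f (x s) * deriv (deriv f) (x s) * T s * (Y s * P s - T s * Q s)" if "s \<in> {0..b}" for s
    proof -
      have e: "W1 s $ 2
        + (\<Sum>i\<in>UNIV. \<Sum>j\<in>UNIV. christ (gf f) 2 i j (\<gamma> s) * vel \<gamma> b s $ i * covd (gf f) \<gamma> b J1 J s $ j)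
        + (\<Sum>i\<in>UNIV. \<Sum>j\<in>UNIV. \<Sum>k\<in>UNIV. riem (gf f) 2 i j k (\<gamma> s) * J s $ i * vel \<gamma> b s $ j * vel \<gamma> b s $ k)
        = 0" using jac[OF that] by blast
      show ?thesis using e unfolding vel[OF that] cg rg sum_2 riemv_def V1_def U_def V_def x_def T_def Y_def P_def Q_def
        using fpos[of "\<gamma> s $ 2"] by (simp add: field_simps)
    qed
    have zero: "P s = 0 \<and> Q s = 0" if "s \<in> {0..b}" for s
    proof (cases "s1 < s2")
      case True
      show ?thesis
        by (rule core[OF fd fdd c2 fpos fle b dx dT dY x0 tl dP dQ Ud Vd dU dV U1d V1d s12(1,2) True _ _ _ _ that])
           (use J in \<open>auto simp: P_def Q_def\<close>)
    next
      case False
      then have "s2 < s1" using s12(3) by auto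
      show ?thesis
        by (rule core[OF fd fdd c2 fpos fle b dx dT dY x0 tl dP dQ Ud Vd dU dV U1d V1d s12(2,1) \<open>s2 < s1\<close> _ _ _ _ that])
           (use J in \<open>auto simp: P_def Q_def\<close>)
    qed
    obtain s where s: "s \<in> {0..b}" "J s \<noteq> 0" using J(4) by blast
    have "J s = 0" using zero[OF s(1)] unfolding P_def Q_def
      by (simp add: vec_eq_iff forall_2)
    then show False using s(2) by simp
  qed
qed


end
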